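(* Let $\alpha$ be an ordinal and let $X$ be a metric space with $X=\bigcup_{i\in I}X_i$. Suppose that $\{X_i\}_{i\in I}\in\mathfrak{C}_\alpha$ and that for every $r>0$ there is a subspace $Y(r)\subset X$ such that the collection $\{X_i\setminus Y(r)\}_{i\in I}$ is $r$-disjoint, where moreover $\{Y(r)\}_{r>0}\in\mathfrak{C}_\alpha$. Then $\{X\}\in\mathfrak{C}_\alpha$.
   Context: A family $\mathcal{U}$ of metric subspaces of a metric space $(X,d)$ is $r$-disjoint if $d(x,y)>r$ whenever $x\in U$, $y\in U'$, $U\neq U'$ in $\mathcal{U}$. For families $\mathcal{X},\mathcal{Y}$ and $R\in\mathbb{R}^{\mathbb{N}}$, $\mathcal{X}\xrightarrow{R}\mathcal{Y}$ means: there is an integer $k$ such that for each $X\in\mathcal{X}$ there are subcollections $\mathcal{U}_1,\dots,\mathcal{U}_k\subseteq\mathcal{Y}$ of subspaces of $X$, each $\mathcal{U}_i$ being $R_i$-disjoint, with $\bigcup_i\mathcal{U}_i$ covering $X$. A family is bounded if the diameters of its members are uniformly bounded. $\mathfrak{C}_0$ is the class of bounded families; for an ordinal $\alpha>0$, $\mathfrak{C}_\alpha$ is the class of families $\mathcal{X}$ such that for every $R\in\mathbb{R}^{\mathbb{N}}$ there exist $\beta<\alpha$ and $\mathcal{Y}\in\mathfrak{C}_\beta$ with $\mathcal{X}\xrightarrow{R}\mathcal{Y}$. All subspaces carry the induced metric. *)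

theory Defs
  imports "HOL-Analysis.Analysis"
begin

text \<open>Families of metric subspaces are modelled as sets of subsets of an ambient
  metric space (type class metric_space); subspaces carry the induced metric.
  Ordinals are modelled as elements of an arbitrary well-ordered type.\<close>

definition r_disjoint :: "real \<Rightarrow> 'a::metric_space set set \<Rightarrow> bool" where
  "r_disjoint r U \<longleftrightarrow>
     (\<forall>A\<in>U. \<forall>B\<in>U. A \<noteq> B \<longrightarrow> (\<forall>x\<in>A. \<forall>y\<in>B. dist x y > r))"

definition bounded_family :: "'a::metric_space set set \<Rightarrow> bool" where
  "bounded_family F \<longleftrightarrow> (\<exists>D. \<forall>A\<in>F. \<forall>x\<in>A. \<forall>y\<in>A. dist x y \<le> D)"

definition decomposes :: "(nat \<Rightarrow> real) \<Rightarrow> 'a::metric_space set set \<Rightarrow> 'a set set \<Rightarrow> bool" where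
  "decomposes R XX YY \<longleftrightarrow>
     (\<exists>k::nat. \<forall>X\<in>XX. \<exists>U :: nat \<Rightarrow> 'a set set.
        (\<forall>i\<in>{1..k}. U i \<subseteq> YY \<and> (\<forall>V\<in>U i. V \<subseteq> X) \<and> r_disjoint (R i) (U i))
        \<and> X \<subseteq> (\<Union>i\<in>{1..k}. \<Union>(U i)))"

text \<open>Cclass alpha is the class C_alpha (well-founded recursion on the ordinal,
  realised as an inductive definition; the fixpoint is unique by well-foundedness).\<close>
inductive inC :: "'o::wellorder \<Rightarrow> 'a::metric_space set set \<Rightarrow> bool" where
  zero: "\<lbrakk>\<not> (\<exists>\<beta>. \<beta> < \<alpha>); bounded_family XX\<rbrakk> \<Longrightarrow> inC \<alpha> XX"
| succ: "\<lbrakk>\<exists>\<beta>. \<beta> < \<alpha>;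
          \<forall>R. \<exists>\<beta><\<alpha>. \<exists>YY. inC \<beta> YY \<and> decomposes R XX YY\<rbrakk> \<Longrightarrow> inC \<alpha> XX"

definition Cclass :: "'o::wellorder \<Rightarrow> 'a::metric_space set set set" where
  "Cclass \<alpha> = {XX. inC \<alpha> XX}"

end

theory Submission
  imports Defs
begin

definition dec_at :: "(nat \<Rightarrow> real) \<Rightarrow> nat \<Rightarrow> 'a::metric_space set \<Rightarrow> 'a set set \<Rightarrow> (nat \<Rightarrow> 'a set set) \<Rightarrow> bool" where
  "dec_at R k X YY U \<longleftrightarrow> (\<forall>i\<in>{1..k}. U i \<subseteq> YY \<and> (\<forall>V\<in>U i. V \<subseteq> X) \<and> r_disjoint (R i) (U i))
        \<and> X \<subseteq> (\<Union>i\<in>{1..k}. \<Union>(U i))"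

lemma decomposes_alt: "decomposes R XX YY \<longleftrightarrow> (\<exists>k. \<forall>X\<in>XX. \<exists>U. dec_at R k X YY U)"
  unfolding decomposes_def dec_at_def by simp

lemma dec_at_mono:
  assumes "dec_at R k X YY U" "k \<le> k'" "YY \<subseteq> YY'"
  shows "dec_at R k' X YY' (\<lambda>i. if i \<le> k then U i else {})"
proof -
  have Ui: "U i \<subseteq> YY \<and> (\<forall>V\<in>U i. V \<subseteq> X) \<and> r_disjoint (R i) (U i)" if "i \<in> {1..k}" for i
  proof -
    have "\<forall>i\<in>{1..k}. U i \<subseteq> YY \<and> (\<forall>V\<in>U i. V \<subseteq> X) \<and> r_disjoint (R i) (U i)"
      using assms(1) unfolding dec_at_def by (rule conjunct1)
    then show ?thesis using that by (rule bspec)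
  qed
  have 1: "(if i \<le> k then U i else {}) \<subseteq> YY' \<and> (\<forall>V\<in>(if i \<le> k then U i else {}). V \<subseteq> X)
      \<and> r_disjoint (R i) (if i \<le> k then U i else {})" if i: "i \<in> {1..k'}" for i
  proof (cases "i \<le> k")
    case True
    then have "i \<in> {1..k}" using i by simp
    then show ?thesis using Ui[of i] True assms(3) by auto
  next
    case False
    then show ?thesis by (simp add: r_disjoint_def)
  qed
  have 2: "X \<subseteq> (\<Union>i\<in>{1..k'}. \<Union>(if i \<le> k then U i else {}))"
  proof
    fix x assume "x \<in> X"
    then obtain i V where iV: "i \<in> {1..k}" "V \<in> U i" "x \<in> V" using assms(1) unfolding dec_at_def by blast
    have i': "i \<in> {1..k'}" "i \<le> k" using iV(1) assms(2) by auto
    have "V \<in> (if i \<le> k then U i else {})" using iV(2) i'(2) by simp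
    then have "x \<in> \<Union>(if i \<le> k then U i else {})" using iV(3) by (rule UnionI)
    then show "x \<in> (\<Union>i\<in>{1..k'}. \<Union>(if i \<le> k then U i else {}))"
      by (rule UN_I[OF i'(1)])
  qed
  show ?thesis unfolding dec_at_def
  proof (rule conjI)
    show "\<forall>i\<in>{1..k'}. (if i \<le> k then U i else {}) \<subseteq> YY' \<and> (\<forall>V\<in>(if i \<le> k then U i else {}). V \<subseteq> X)
      \<and> r_disjoint (R i) (if i \<le> k then U i else {})"
      by (rule ballI, rule 1)
  qed (rule 2)
qed

lemma inC_zero_iff: "\<not>(\<exists>\<beta>. \<beta><\<alpha>) \<Longrightarrow> inC \<alpha> XX \<longleftrightarrow> bounded_family XX"
  by (auto elim: inC.cases intro: inC.zero)

lemma inC_succ_iff: "(\<exists>\<beta>. \<beta><\<alpha>) \<Longrightarrow> inC \<alpha> XX \<longleftrightarrow> (\<forall>R. \<exists>\<beta><\<alpha>. \<exists>YY. inC \<beta> YY \<and> decomposes R XX YY)"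
  by (auto elim: inC.cases intro: inC.succ)

lemma inC_succD: "inC \<alpha> XX \<Longrightarrow> (\<exists>\<beta>. \<beta><\<alpha>) \<Longrightarrow> \<exists>\<beta><\<alpha>. \<exists>YY. inC \<beta> YY \<and> decomposes R XX YY"
  by (simp add: inC_succ_iff)

lemma decomposes_self: "decomposes R XX XX"
  unfolding decomposes_alt
proof (intro exI[of _ 1] ballI)
  fix X assume "X \<in> XX"
  then have "dec_at R 1 X XX (\<lambda>_. {X})" unfolding dec_at_def r_disjoint_def by auto
  then show "\<exists>U. dec_at R 1 X XX U" by blast
qed

lemma inC_mono: "inC \<beta> XX \<Longrightarrow> \<beta> < \<alpha> \<Longrightarrow> inC \<alpha> XX"
proof (rule inC.succ)
  assume a: "inC \<beta> XX" "\<beta> < \<alpha>"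
  then show "\<exists>\<beta>. \<beta> < \<alpha>" by blast
  show "\<forall>R. \<exists>\<beta>'<\<alpha>. \<exists>YY. inC \<beta>' YY \<and> decomposes R XX YY"
  proof
    fix R show "\<exists>\<beta>'<\<alpha>. \<exists>YY. inC \<beta>' YY \<and> decomposes R XX YY"
      using a decomposes_self[of R XX] by blast
  qed
qed

lemma inC_mono_le: "inC \<beta> XX \<Longrightarrow> \<beta> \<le> \<alpha> \<Longrightarrow> inC \<alpha> XX"
  by (cases "\<beta> = \<alpha>") (auto intro: inC_mono)

lemma dec_at_D:
  assumes "dec_at R k X YY U" "i \<in> {1..k}"
  shows "U i \<subseteq> YY" "\<forall>V\<in>U i. V \<subseteq> X" "r_disjoint (R i) (U i)"
proof -
  have "\<forall>i\<in>{1..k}. U i \<subseteq> YY \<and> (\<forall>V\<in>U i. V \<subseteq> X) \<and> r_disjoint (R i) (U i)"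
    using assms(1) unfolding dec_at_def by (rule conjunct1)
  then have "U i \<subseteq> YY \<and> (\<forall>V\<in>U i. V \<subseteq> X) \<and> r_disjoint (R i) (U i)" using assms(2) by (rule bspec)
  then show "U i \<subseteq> YY" "\<forall>V\<in>U i. V \<subseteq> X" "r_disjoint (R i) (U i)" by simp_all
qed

lemma dec_at_cover:
  assumes "dec_at R k X YY U" "x \<in> X"
  obtains i V where "i \<in> {1..k}" "V \<in> U i" "x \<in> V"
proof -
  have "X \<subseteq> (\<Union>i\<in>{1..k}. \<Union>(U i))" using assms(1) unfolding dec_at_def by (rule conjunct2)
  then have "x \<in> (\<Union>i\<in>{1..k}. \<Union>(U i))" using assms(2) by (rule subsetD)
  then show ?thesis using that by auto
qed

lemma dec_atI:
  assumes "\<And>i. i \<in> {1..k} \<Longrightarrow> U i \<subseteq> YY"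
    "\<And>i V. i \<in> {1..k} \<Longrightarrow> V \<in> U i \<Longrightarrow> V \<subseteq> X"
    "\<And>i. i \<in> {1..k} \<Longrightarrow> r_disjoint (R i) (U i)"
    "\<And>x. x \<in> X \<Longrightarrow> \<exists>i\<in>{1..k}. \<exists>V\<in>U i. x \<in> V"
  shows "dec_at R k X YY U"
  unfolding dec_at_def
proof (rule conjI)
  show "\<forall>i\<in>{1..k}. U i \<subseteq> YY \<and> (\<forall>V\<in>U i. V \<subseteq> X) \<and> r_disjoint (R i) (U i)"
  proof
    fix i assume "i \<in> {1..k}"
    then show "U i \<subseteq> YY \<and> (\<forall>V\<in>U i. V \<subseteq> X) \<and> r_disjoint (R i) (U i)"
      using assms(1,2,3)[of i] by simp
  qed
  show "X \<subseteq> (\<Union>i\<in>{1..k}. \<Union>(U i))"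
  proof
    fix x assume "x \<in> X"
    then obtain i V where "i \<in> {1..k}" "V \<in> U i" "x \<in> V" using assms(4) by meson
    then show "x \<in> (\<Union>i\<in>{1..k}. \<Union>(U i))" by auto
  qed
qed

lemma inC_sub:
  "inC \<alpha> XX \<Longrightarrow> \<forall>A\<in>XX'. \<exists>B\<in>XX. A \<subseteq> B \<Longrightarrow> inC \<alpha> XX'"
proof (induction \<alpha> arbitrary: XX XX' rule: less_induct)
  case (less \<alpha>)
  show ?case
  proof (cases "\<exists>\<beta>. \<beta><\<alpha>")
    case False
    then have "bounded_family XX" using less.prems(1) by (simp add: inC_zero_iff[OF False])
    then obtain D where D: "\<forall>A\<in>XX. \<forall>x\<in>A. \<forall>y\<in>A. dist x y \<le> D" unfolding bounded_family_def by auto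
    have "\<forall>A\<in>XX'. \<forall>x\<in>A. \<forall>y\<in>A. dist x y \<le> D"
    proof (intro ballI)
      fix A x y assume "A \<in> XX'" "x \<in> A" "y \<in> A"
      then obtain B where "B \<in> XX" "A \<subseteq> B" using less.prems(2) by auto
      then show "dist x y \<le> D" using D \<open>x \<in> A\<close> \<open>y \<in> A\<close> by auto
    qed
    then have "bounded_family XX'" unfolding bounded_family_def by auto
    then show ?thesis by (simp add: inC_zero_iff[OF False])
  next
    case True
    have hXX: "\<forall>R. \<exists>\<beta><\<alpha>. \<exists>YY. inC \<beta> YY \<and> decomposes R XX YY"
      using less.prems(1) by (simp add: inC_succ_iff[OF True])
    show ?thesis unfolding inC_succ_iff[OF True]
    proof
      fix R
      obtain \<beta> YY where b: "\<beta><\<alpha>" "inC \<beta> YY" "decomposes R XX YY"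
        using inC_succD[OF less.prems(1) True, of R] by auto
      obtain k where k: "\<forall>X\<in>XX. \<exists>U. dec_at R k X YY U" using b(3) unfolding decomposes_alt by auto
      define YY' where "YY' = {S. \<exists>V\<in>YY. S \<subseteq> V}"
      have sub: "\<forall>A\<in>YY'. \<exists>B\<in>YY. A \<subseteq> B" unfolding YY'_def by auto
      have iYY': "inC \<beta> YY'" using less.IH[OF b(1) b(2) sub] .
      have "\<exists>U. dec_at R k A YY' U" if "A \<in> XX'" for A
      proof -
        obtain B where B: "B \<in> XX" "A \<subseteq> B" using less.prems(2) \<open>A \<in> XX'\<close> by auto
        obtain U where U: "dec_at R k B YY U" using k B(1) by auto
        have "dec_at R k A YY' (\<lambda>i. (\<lambda>V. V \<inter> A) ` U i)"
        proof (rule dec_atI)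
          fix i assume i: "i \<in> {1..k}"
          note Ui = dec_at_D[OF U i]
          show "(\<lambda>V. V \<inter> A) ` U i \<subseteq> YY'"
          proof
            fix P assume "P \<in> (\<lambda>V. V \<inter> A) ` U i"
            then obtain V where "V \<in> U i" "P = V \<inter> A" by auto
            then have "V \<in> YY" "P \<subseteq> V" using Ui(1) by auto
            then show "P \<in> YY'" unfolding YY'_def by auto
          qed
          show "r_disjoint (R i) ((\<lambda>V. V \<inter> A) ` U i)"
            unfolding r_disjoint_def
          proof (intro ballI impI)
            fix P Q x y assume PQ: "P \<in> (\<lambda>V. V \<inter> A) ` U i" "Q \<in> (\<lambda>V. V \<inter> A) ` U i" "P \<noteq> Q" "x \<in> P" "y \<in> Q"
            obtain V where V: "V \<in> U i" "P = V \<inter> A" using PQ(1) by auto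
            obtain V' where V': "V' \<in> U i" "Q = V' \<inter> A" using PQ(2) by auto
            have "V \<noteq> V'" using V(2) V'(2) PQ(3) by auto
            moreover have "x \<in> V" "y \<in> V'" using V(2) V'(2) PQ(4,5) by auto
            ultimately show "R i < dist x y" using Ui(3) V(1) V'(1) unfolding r_disjoint_def by simp
          qed
        next
          fix i V assume "V \<in> (\<lambda>V. V \<inter> A) ` U i"
          then show "V \<subseteq> A" by auto
        next
          fix x assume "x \<in> A"
          then have "x \<in> B" using B(2) by auto
          then obtain i V where "i \<in> {1..k}" "V \<in> U i" "x \<in> V" using dec_at_cover[OF U] by metis
          then show "\<exists>i\<in>{1..k}. \<exists>V\<in>(\<lambda>V. V \<inter> A) ` U i. x \<in> V" using \<open>x \<in> A\<close> by auto
        qed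
        then show ?thesis by auto
      qed
      then have "decomposes R XX' YY'" unfolding decomposes_alt by auto
      then show "\<exists>\<beta><\<alpha>. \<exists>YY. inC \<beta> YY \<and> decomposes R XX' YY" using b(1) iYY' by auto
    qed
  qed
qed

lemma decomposes_Un:
  assumes "decomposes R XX1 YY1" "decomposes R XX2 YY2"
  shows "decomposes R (XX1 \<union> XX2) (YY1 \<union> YY2)"
proof -
  obtain k1 where k1: "\<forall>X\<in>XX1. \<exists>U. dec_at R k1 X YY1 U" using assms(1) decomposes_alt by blast
  obtain k2 where k2: "\<forall>X\<in>XX2. \<exists>U. dec_at R k2 X YY2 U" using assms(2) decomposes_alt by blast
  have "\<forall>X\<in>XX1 \<union> XX2. \<exists>U. dec_at R (max k1 k2) X (YY1 \<union> YY2) U"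
  proof
    fix X assume "X \<in> XX1 \<union> XX2"
    then show "\<exists>U. dec_at R (max k1 k2) X (YY1 \<union> YY2) U"
    proof
      assume "X \<in> XX1"
      then obtain U where "dec_at R k1 X YY1 U" using k1 by blast
      then show ?thesis using dec_at_mono[of R k1 X YY1 U "max k1 k2" "YY1 \<union> YY2"] by auto
    next
      assume "X \<in> XX2"
      then obtain U where "dec_at R k2 X YY2 U" using k2 by blast
      then show ?thesis using dec_at_mono[of R k2 X YY2 U "max k1 k2" "YY1 \<union> YY2"] by auto
    qed
  qed
  then show ?thesis unfolding decomposes_alt by blast
qed

lemma inC_Un:
  "inC \<alpha> XX1 \<Longrightarrow> inC \<alpha> XX2 \<Longrightarrow> inC \<alpha> (XX1 \<union> XX2)"
proof (induction \<alpha> arbitrary: XX1 XX2 rule: less_induct)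
  case (less \<alpha>)
  show ?case
  proof (cases "\<exists>\<beta>. \<beta><\<alpha>")
    case False
    then have "bounded_family XX1" "bounded_family XX2" using less.prems by (simp_all add: inC_zero_iff[OF False])
    then obtain D1 D2 where "\<forall>A\<in>XX1. \<forall>x\<in>A. \<forall>y\<in>A. dist x y \<le> D1"
      "\<forall>A\<in>XX2. \<forall>x\<in>A. \<forall>y\<in>A. dist x y \<le> D2" unfolding bounded_family_def by blast
    then have "\<forall>A\<in>XX1 \<union> XX2. \<forall>x\<in>A. \<forall>y\<in>A. dist x y \<le> max D1 D2" by force
    then have "bounded_family (XX1 \<union> XX2)" unfolding bounded_family_def by blast
    then show ?thesis by (simp add: inC_zero_iff[OF False])
  next
    case True
    show ?thesis unfolding inC_succ_iff[OF True]
    proof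
      fix R
      obtain \<beta>1 YY1 where b1: "\<beta>1<\<alpha>" "inC \<beta>1 YY1" "decomposes R XX1 YY1"
        using inC_succD[OF less.prems(1) True, of R] by auto
      obtain \<beta>2 YY2 where b2: "\<beta>2<\<alpha>" "inC \<beta>2 YY2" "decomposes R XX2 YY2"
        using inC_succD[OF less.prems(2) True, of R] by auto
      define \<beta> where "\<beta> = max \<beta>1 \<beta>2"
      have bl: "\<beta> < \<alpha>" using b1 b2 unfolding \<beta>_def by simp
      have h1: "inC \<beta> YY1" using inC_mono_le[OF b1(2), of \<beta>] unfolding \<beta>_def by simp
      have h2: "inC \<beta> YY2" using inC_mono_le[OF b2(2), of \<beta>] unfolding \<beta>_def by simp
      have "inC \<beta> (YY1 \<union> YY2)" using less.IH[OF bl h1 h2] .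
      then show "\<exists>\<beta><\<alpha>. \<exists>YY. inC \<beta> YY \<and> decomposes R (XX1 \<union> XX2) YY"
        using bl decomposes_Un[OF b1(3) b2(3)] by blast
    qed
  qed
qed

lemma bounded_case:
  assumes X: "X = (\<Union>i\<in>I. Xs i)" and b1: "bounded_family (Xs ` I)"
    and Yr: "\<forall>r>0. Y r \<subseteq> X \<and> r_disjoint r ((\<lambda>i. Xs i - Y r) ` I)"
    and b2: "bounded_family (Y ` {0<..})"
  shows "bounded_family {X}"
proof -
  obtain D1 where D1: "\<forall>A\<in>Xs ` I. \<forall>x\<in>A. \<forall>y\<in>A. dist x y \<le> D1"
    using b1 unfolding bounded_family_def by blast
  obtain D2 where D2: "\<forall>A\<in>Y ` {0<..}. \<forall>x\<in>A. \<forall>y\<in>A. dist x y \<le> D2"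
    using b2 unfolding bounded_family_def by blast
  define D where "D = max (max D1 D2) 0"
  have pair: "dist x y \<le> D" if pa: "x\<in>X" "y\<in>X" "dist x y < r" "r > 0" "x \<in> Y r \<longleftrightarrow> y \<in> Y r" for x y r
  proof (cases "x \<in> Y r")
    case True
    then have "y \<in> Y r" using that by blast
    moreover have "Y r \<in> Y ` {0<..}" using \<open>r>0\<close> by simp
    ultimately have "dist x y \<le> D2" using D2 True by blast
    then show ?thesis unfolding D_def by linarith
  next
    case False
    then have ny: "y \<notin> Y r" using that by blast
    have "x \<in> (\<Union>i\<in>I. Xs i)" "y \<in> (\<Union>i\<in>I. Xs i)" using pa(1,2) X by simp_all
    then obtain i j where ij: "i \<in> I" "j \<in> I" "x \<in> Xs i" "y \<in> Xs j" by blast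
    have "Xs i - Y r = Xs j - Y r"
    proof (rule ccontr)
      assume "Xs i - Y r \<noteq> Xs j - Y r"
      note neq = this
      have rd: "r_disjoint r ((\<lambda>i. Xs i - Y r) ` I)" using Yr \<open>r>0\<close> by blast
      have m1: "Xs i - Y r \<in> (\<lambda>i. Xs i - Y r) ` I" using ij(1) by (rule imageI)
      have m2: "Xs j - Y r \<in> (\<lambda>i. Xs i - Y r) ` I" using ij(2) by (rule imageI)
      have xm: "x \<in> Xs i - Y r" using ij False by blast
      have ym: "y \<in> Xs j - Y r" using ij ny by blast
      have "dist x y > r" using rd[unfolded r_disjoint_def, rule_format, OF m1 m2 neq xm ym] .
      then show False using pa by linarith
    qed
    then have "y \<in> Xs i" using ij ny by blast
    then have "dist x y \<le> D1" using D1 ij by blast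
    then show ?thesis unfolding D_def by linarith
  qed
  have three: False if "x\<in>X" "y\<in>X" "z\<in>X" "dist x y > D" "dist y z > D" "dist x z > D" for x y z
  proof -
    define r where "r = dist x y + dist y z + dist x z + 1"
    have r: "r > 0" "dist x y < r" "dist y z < r" "dist x z < r"
      using zero_le_dist[of x y] zero_le_dist[of y z] zero_le_dist[of x z] unfolding r_def by linarith+
    have "\<not> (x \<in> Y r \<longleftrightarrow> y \<in> Y r)" using pair[OF that(1,2) r(2,1)] that by linarith
    moreover have "\<not> (y \<in> Y r \<longleftrightarrow> z \<in> Y r)" using pair[OF that(2,3) r(3,1)] that by linarith
    moreover have "\<not> (x \<in> Y r \<longleftrightarrow> z \<in> Y r)" using pair[OF that(1,3) r(4,1)] that by linarith
    ultimately show False by blast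
  qed
  show ?thesis
  proof (cases "X = {}")
    case True
    then show ?thesis unfolding bounded_family_def by auto
  next
    case False
    then obtain x0 where x0: "x0 \<in> X" by blast
    obtain \<rho> where rho: "\<forall>y\<in>X. dist x0 y \<le> \<rho>"
    proof (cases "\<exists>y1\<in>X. dist x0 y1 > D")
      case True
      then obtain y1 where y1: "y1 \<in> X" "dist x0 y1 > D" by blast
      have "\<forall>y\<in>X. dist x0 y \<le> dist x0 y1 + D"
      proof (rule ballI, rule ccontr)
        fix y assume y: "y \<in> X" "\<not> dist x0 y \<le> dist x0 y1 + D"
        have "dist x0 y \<le> dist x0 y1 + dist y1 y" by (rule dist_triangle)
        then have "dist y1 y > D" using y by linarith
        moreover have "D \<ge> 0" unfolding D_def by simp
        ultimately show False using three[OF x0 y1(1) y(1)] y y1 by linarith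
      qed
      then show ?thesis using that by blast
    next
      case False
      then have "\<forall>y\<in>X. dist x0 y \<le> D" by (auto simp: not_less)
      then show ?thesis using that by blast
    qed
    have "\<forall>x\<in>X. \<forall>y\<in>X. dist x y \<le> 2 * \<rho>"
    proof (intro ballI)
      fix x y assume "x \<in> X" "y \<in> X"
      have "dist x y \<le> dist x0 x + dist x0 y" by (rule dist_triangle3)
      moreover have "dist x0 x \<le> \<rho>" "dist x0 y \<le> \<rho>" using rho \<open>x\<in>X\<close> \<open>y\<in>X\<close> by auto
      ultimately show "dist x y \<le> 2 * \<rho>" by linarith
    qed
    then show ?thesis unfolding bounded_family_def by (intro exI[of _ "2 * \<rho>"]) simp
  qed
qed

theorem theorem4p3:
  fixes \<alpha> :: "'o::wellorder"
    and X :: "'a::metric_space set"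
    and I :: "'i set"
    and Xs :: "'i \<Rightarrow> 'a set"
    and Y :: "real \<Rightarrow> 'a set"
  assumes "X = (\<Union>i\<in>I. Xs i)"
    and "Xs ` I \<in> Cclass \<alpha>"
    and "\<forall>r>0. Y r \<subseteq> X \<and> r_disjoint r ((\<lambda>i. Xs i - Y r) ` I)"
    and "Y ` {0<..} \<in> Cclass \<alpha>"
  shows "{X} \<in> Cclass \<alpha>"
proof -
  note A = assms
  show ?thesis
  proof (cases "\<exists>\<beta>. \<beta><\<alpha>")
    case False
    have b: "bounded_family (Xs ` I)" "bounded_family (Y ` {0<..})"
      using A(2,4) by (simp_all add: Cclass_def inC_zero_iff[OF False])
    have "bounded_family {X}" by (rule bounded_case[OF A(1) b(1) A(3) b(2)])
    then show ?thesis by (simp add: Cclass_def inC_zero_iff[OF False])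
  next
    case True
    have hX: "inC \<alpha> (Xs ` I)" "inC \<alpha> (Y ` {0<..})" using A(2,4) unfolding Cclass_def by auto
    have "inC \<alpha> {X}" unfolding inC_succ_iff[OF True]
    proof
      fix R
      obtain \<beta>1 ZZ where b1: "\<beta>1<\<alpha>" "inC \<beta>1 ZZ" "decomposes R (Xs ` I) ZZ"
        using inC_succD[OF hX(1) True, of R] by auto
      obtain k1 where "\<forall>S\<in>Xs ` I. \<exists>U. dec_at R k1 S ZZ U" using b1(3) unfolding decomposes_alt by auto
      then obtain UX where UX: "\<And>S. S \<in> Xs ` I \<Longrightarrow> dec_at R k1 S ZZ (UX S)" by metis
      define R' where "R' = (\<lambda>i. R (i + k1))"
      obtain \<beta>2 WW where b2: "\<beta>2<\<alpha>" "inC \<beta>2 WW" "decomposes R' (Y ` {0<..}) WW"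
        using inC_succD[OF hX(2) True, of R'] by auto
      obtain k2 where k2: "\<forall>S\<in>Y ` {0<..}. \<exists>U. dec_at R' k2 S WW U" using b2(3) unfolding decomposes_alt by auto
      define r where "r = max 1 (Max (insert 0 (R ` {1..k1})))"
      have rpos: "r > 0" unfolding r_def by simp
      have rR: "R j \<le> r" if "j \<in> {1..k1}" for j
      proof -
        have "R j \<le> Max (insert 0 (R ` {1..k1}))" using that by (intro Max_ge) auto
        then show ?thesis unfolding r_def by linarith
      qed
      define Yr where "Yr = Y r"
      have "Yr \<in> Y ` {0<..}" using rpos unfolding Yr_def by simp
      then obtain UY where UY: "dec_at R' k2 Yr WW UY" using k2 by auto
      have "Y r \<subseteq> X \<and> r_disjoint r ((\<lambda>i. Xs i - Y r) ` I)" using A(3) rpos by simp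
      then have Yr: "Yr \<subseteq> X" "r_disjoint r ((\<lambda>i. Xs i - Yr) ` I)" unfolding Yr_def by simp_all
      define PP where "PP = (\<lambda>i. Xs i - Yr) ` I"
      define rep where "rep = (\<lambda>B. SOME S. S \<in> Xs ` I \<and> S - Yr = B)"
      have rep: "rep B \<in> Xs ` I" "rep B - Yr = B" if BP: "B \<in> PP" for B
      proof -
        obtain i where "i \<in> I" "B = Xs i - Yr" using BP unfolding PP_def by auto
        then have "\<exists>S. S \<in> Xs ` I \<and> S - Yr = B" by auto
        then have "rep B \<in> Xs ` I \<and> rep B - Yr = B" unfolding rep_def by (rule someI_ex)
        then show "rep B \<in> Xs ` I" "rep B - Yr = B" by simp_all
      qed
      have repX: "rep B \<subseteq> X" if BP: "B \<in> PP" for B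
      proof -
        obtain i where "i \<in> I" "rep B = Xs i" using rep(1)[OF BP] by auto
        then show ?thesis unfolding A(1) by auto
      qed
      define U where "U = (\<lambda>j. if j \<le> k1 then (\<lambda>V. V - Yr) ` (\<Union>B\<in>PP. UX (rep B) j) else UY (j - k1))"
      have U1: "\<exists>B V. B \<in> PP \<and> V \<in> UX (rep B) j \<and> P = V - Yr" if "j \<le> k1" "P \<in> U j" for j P
        using that unfolding U_def by auto
      define \<beta> where "\<beta> = max \<beta>1 \<beta>2"
      have bl: "\<beta> < \<alpha>" using b1 b2 unfolding \<beta>_def by simp
      define YY where "YY = {S. \<exists>V\<in>ZZ \<union> WW. S \<subseteq> V}"
      have h1: "inC \<beta> ZZ" using inC_mono_le[OF b1(2), of \<beta>] unfolding \<beta>_def by simp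
      have h2: "inC \<beta> WW" using inC_mono_le[OF b2(2), of \<beta>] unfolding \<beta>_def by simp
      have "inC \<beta> (ZZ \<union> WW)" using inC_Un[OF h1 h2] .
      moreover have "\<forall>A\<in>YY. \<exists>B\<in>ZZ \<union> WW. A \<subseteq> B" unfolding YY_def by auto
      ultimately have iYY: "inC \<beta> YY" by (rule inC_sub)
      have d: "dec_at R (k1 + k2) X YY U"
      proof (rule dec_atI)
        fix j assume j: "j \<in> {1..k1+k2}"
        show "U j \<subseteq> YY"
        proof (cases "j \<le> k1")
          case True
          then have jj: "j \<in> {1..k1}" using j by simp
          show ?thesis
          proof
            fix P assume "P \<in> U j"
            then obtain B V where BV: "B \<in> PP" "V \<in> UX (rep B) j" "P = V - Yr"
              using U1[OF True] by blast
            have "UX (rep B) j \<subseteq> ZZ" using dec_at_D(1)[OF UX[OF rep(1)[OF BV(1)]] jj] .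
            then have "V \<in> ZZ" using BV(2) by auto
            then show "P \<in> YY" using BV(3) unfolding YY_def by auto
          qed
        next
          case False
          then have jj: "j - k1 \<in> {1..k2}" using j by auto
          have "UY (j - k1) \<subseteq> WW" using dec_at_D(1)[OF UY jj] .
          then show ?thesis using False unfolding U_def YY_def by auto
        qed
        show "r_disjoint (R j) (U j)"
        proof (cases "j \<le> k1")
          case True
          then have jj: "j \<in> {1..k1}" using j by simp
          show ?thesis unfolding r_disjoint_def
          proof (intro ballI impI)
            fix P Q x y assume PQ: "P \<in> U j" "Q \<in> U j" "P \<noteq> Q" "x \<in> P" "y \<in> Q"
            obtain B V where BV: "B \<in> PP" "V \<in> UX (rep B) j" "P = V - Yr"
              using U1[OF True PQ(1)] by blast
            obtain B' V' where BV': "B' \<in> PP" "V' \<in> UX (rep B') j" "Q = V' - Yr"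
              using U1[OF True PQ(2)] by blast
            have dB: "dec_at R k1 (rep B) ZZ (UX (rep B))" using UX[OF rep(1)[OF BV(1)]] .
            have dB': "dec_at R k1 (rep B') ZZ (UX (rep B'))" using UX[OF rep(1)[OF BV'(1)]] .
            have xV: "x \<in> V" "x \<notin> Yr" using PQ(4) BV(3) by auto
            have yV: "y \<in> V'" "y \<notin> Yr" using PQ(5) BV'(3) by auto
            show "R j < dist x y"
            proof (cases "B = B'")
              case True
              then have "V \<noteq> V'" using PQ(3) BV(3) BV'(3) by auto
              moreover have "V' \<in> UX (rep B) j" using BV'(2) True by simp
              ultimately show ?thesis using dec_at_D(3)[OF dB jj] BV(2) xV(1) yV(1)
                unfolding r_disjoint_def by simp
            next
              case False
              have "V \<subseteq> rep B" using dec_at_D(2)[OF dB jj] BV(2) by simp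
              then have xB: "x \<in> B" using xV rep(2)[OF BV(1)] by auto
              have "V' \<subseteq> rep B'" using dec_at_D(2)[OF dB' jj] BV'(2) by simp
              then have yB: "y \<in> B'" using yV rep(2)[OF BV'(1)] by auto
              have "dist x y > r"
                using Yr(2)[unfolded r_disjoint_def, rule_format, OF BV(1)[unfolded PP_def] BV'(1)[unfolded PP_def] False xB yB] .
              then show ?thesis using rR[OF jj] by linarith
            qed
          qed
        next
          case False
          then have jj: "j - k1 \<in> {1..k2}" using j by auto
          have "r_disjoint (R' (j - k1)) (UY (j - k1))" using dec_at_D(3)[OF UY jj] .
          then show ?thesis using False unfolding U_def R'_def by simp
        qed
      next
        fix j P assume j: "j \<in> {1..k1+k2}" and P: "P \<in> U j"
        show "P \<subseteq> X"
        proof (cases "j \<le> k1")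
          case True
          then have jj: "j \<in> {1..k1}" using j by simp
          obtain B V where BV: "B \<in> PP" "V \<in> UX (rep B) j" "P = V - Yr"
            using U1[OF True P] by blast
          have "V \<subseteq> rep B" using dec_at_D(2)[OF UX[OF rep(1)[OF BV(1)]] jj] BV(2) by simp
          then show "P \<subseteq> X" using repX[OF BV(1)] BV(3) by auto
        next
          case False
          then have jj: "j - k1 \<in> {1..k2}" using j by auto
          have "P \<in> UY (j - k1)" using P False unfolding U_def by simp
          then have "P \<subseteq> Yr" using dec_at_D(2)[OF UY jj] by simp
          then show ?thesis using Yr(1) by auto
        qed
      next
        fix x assume x: "x \<in> X"
        show "\<exists>j\<in>{1..k1 + k2}. \<exists>V\<in>U j. x \<in> V"
        proof (cases "x \<in> Yr")
          case True
          then obtain j W where jW: "j \<in> {1..k2}" "W \<in> UY j" "x \<in> W" using dec_at_cover[OF UY] by metis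
          then have m: "W \<in> U (j + k1)" unfolding U_def by simp
          have jj: "j + k1 \<in> {1..k1+k2}" using jW by auto
          show ?thesis by (rule bexI[where P="\<lambda>j. \<exists>V\<in>U j. x \<in> V", OF bexI[where P="\<lambda>V. x \<in> V", OF jW(3) m] jj])
        next
          case False
          obtain i where i: "i \<in> I" "x \<in> Xs i" using x unfolding A(1) by auto
          define B where "B = Xs i - Yr"
          have B: "B \<in> PP" "x \<in> B" using i False unfolding B_def PP_def by auto
          then have "x \<in> rep B" using rep(2)[OF B(1)] by auto
          then obtain j V where jV: "j \<in> {1..k1}" "V \<in> UX (rep B) j" "x \<in> V"
            using dec_at_cover[OF UX[OF rep(1)[OF B(1)]]] by metis
          have m: "V - Yr \<in> U j" using B(1) jV(1,2) unfolding U_def by auto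
          have jj: "j \<in> {1..k1+k2}" using jV by auto
          have xin: "x \<in> V - Yr" using jV(3) False by simp
          show ?thesis by (rule bexI[where P="\<lambda>j. \<exists>V\<in>U j. x \<in> V", OF bexI[where P="\<lambda>V. x \<in> V", OF xin m] jj])
        qed
      qed
      have "decomposes R {X} YY" unfolding decomposes_alt using d by auto
      then show "\<exists>\<beta><\<alpha>. \<exists>YY. inC \<beta> YY \<and> decomposes R {X} YY" using bl iYY by auto
    qed
    then show ?thesis unfolding Cclass_def by simp
  qed
qed

end
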